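(* Let $n\geq2$ and let $f$ be a hypercyclic vector for $W_n^{*}$. Then $\mathcal{N}^{\perp}\cap Z_f(W_n^{*})=\{0\}$.
   Context: $H^2$ denotes the Hardy space of analytic functions $f(z)=\sum_{j\ge0}\hat f(j)z^j$ on the open unit disk $\mathbb{D}$ with $\sum_{j}|\hat f(j)|^2<\infty$. For $n\in\mathbb{N}$, $W_n$ is the bounded operator on $H^2$ given by $W_nf(z)=(1+z+\cdots+z^{n-1})f(z^n)$ and $W_n^{*}$ is its adjoint; $f$ is hypercyclic for $W_n^*$ if its orbit $\{(W_n^* )^jf:j\in\mathbb{N}\}$ is dense. For an operator $T$ and vector $x$, $Z_x(T)=\{p(T)x: p \text{ a polynomial}\}$. For each integer $k\geq2$, $h_k(z)=\frac{1}{1-z}\log\left(\frac{1+z+\cdots+z^{k-1}}{k}\right)$ (holomorphic branch of the logarithm on $\mathbb{D}$, real at $z=0$), which lies in $H^2$; $\mathcal{N}=\mathrm{span}\{h_k:k\geq2\}$ and $\mathcal{N}^\perp$ is its orthogonal complement in $H^2$. *)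

theory Defs
  imports "HOL-Analysis.Analysis" "HOL-Computational_Algebra.Polynomial"
begin

text \<open>H^2 is identified with its Taylor coefficient sequences:
  f(z) = sum_j a j * z^j with sum_j |a j|^2 finite.\<close>

definition H2 :: "(nat \<Rightarrow> complex) set" where
  "H2 = {a. summable (\<lambda>j. (cmod (a j))^2)}"

definition h2inner :: "(nat \<Rightarrow> complex) \<Rightarrow> (nat \<Rightarrow> complex) \<Rightarrow> complex" where
  "h2inner a b = (\<Sum>j. a j * cnj (b j))"

definition h2norm :: "(nat \<Rightarrow> complex) \<Rightarrow> real" where
  "h2norm a = sqrt (\<Sum>j. (cmod (a j))^2)"

text \<open>W_n f(z) = (1 + z + ... + z^(n-1)) f(z^n): the coefficient of z^m is a (m div n).\<close>
definition W :: "nat \<Rightarrow> (nat \<Rightarrow> complex) \<Rightarrow> (nat \<Rightarrow> complex)" where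
  "W n a = (\<lambda>m. a (m div n))"

definition Wstar :: "nat \<Rightarrow> (nat \<Rightarrow> complex) \<Rightarrow> (nat \<Rightarrow> complex)" where
  "Wstar n g = (THE h. h \<in> H2 \<and> (\<forall>f\<in>H2. h2inner (W n f) g = h2inner f h))"

definition hypercyclic :: "((nat \<Rightarrow> complex) \<Rightarrow> (nat \<Rightarrow> complex)) \<Rightarrow> (nat \<Rightarrow> complex) \<Rightarrow> bool" where
  "hypercyclic T f \<longleftrightarrow> f \<in> H2 \<and>
     (\<forall>g\<in>H2. \<forall>e>0. \<exists>j::nat. h2norm (\<lambda>i. (T ^^ j) f i - g i) < e)"

definition Zorb :: "((nat \<Rightarrow> complex) \<Rightarrow> (nat \<Rightarrow> complex)) \<Rightarrow> (nat \<Rightarrow> complex) \<Rightarrow> (nat \<Rightarrow> complex) set" where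
  "Zorb T x = {(\<lambda>i. \<Sum>k\<le>degree p. coeff p k * (T ^^ k) x i) | p :: complex poly. True}"

text \<open>h_k(z) = log((1+...+z^(k-1))/k)/(1-z) on the disk. Since arg(1-z^k) and arg(1/(1-z))
  lie in (-pi/2,pi/2), the principal logarithm Ln gives the holomorphic branch real at 0.\<close>
definition hfun :: "nat \<Rightarrow> complex \<Rightarrow> complex" where
  "hfun k z = Ln ((\<Sum>i<k. z ^ i) / of_nat k) / (1 - z)"

definition hk :: "nat \<Rightarrow> nat \<Rightarrow> complex" where
  "hk k j = (deriv ^^ j) (hfun k) 0 / of_nat (fact j)"

definition Nspan :: "(nat \<Rightarrow> complex) set" where
  "Nspan = {(\<lambda>j. \<Sum>i\<in>S. c i * hk i j) | S c. finite S \<and> S \<subseteq> {2..}}"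

definition Nperp :: "(nat \<Rightarrow> complex) set" where
  "Nperp = {g \<in> H2. \<forall>h\<in>Nspan. h2inner g h = 0}"

end

theory Submission
  imports Defs "HOL-Computational_Algebra.Fundamental_Theorem_Algebra"
begin


definition cc :: "nat \<Rightarrow> nat \<Rightarrow> complex" where
  "cc k m = (if m = 0 then - of_real (ln (real k)) else 0) + 1 / of_nat m
            - (if k dvd m then of_nat k / of_nat m else 0)"

lemma Ln_S_eq:
  fixes z :: complex
  assumes k: "k \<ge> 1" and z: "norm z < 1"
  shows "Ln ((\<Sum>i<k. z ^ i) / of_nat k) = Ln (1 - z ^ k) - Ln (1 - z) - of_real (ln (real k))"
proof -
  have z1: "z \<noteq> 1" using z by auto
  have nzk: "norm (z ^ k) < 1" using z k by (simp add: norm_power power_less_one_iff)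
  have re1: "Re (1 - z) > 0" using z complex_Re_le_cmod[of z] by simp
  have re2: "Re (1 - z ^ k) > 0" using nzk complex_Re_le_cmod[of "z^k"] by simp
  have ne1: "1 - z \<noteq> 0" and ne2: "1 - z ^ k \<noteq> 0" using re1 re2 by auto
  have re3: "Re (inverse (1 - z)) > 0" using re1 ne1
    by (simp add: Re_divide inverse_eq_divide) (auto intro!: divide_pos_pos add_pos_nonneg)
  have S: "(\<Sum>i<k. z ^ i) = (1 - z ^ k) * inverse (1 - z)"
    using z1 by (simp add: sum_gp_strict divide_inverse)
  have eq: "(\<Sum>i<k. z ^ i) / of_nat k = of_real (1 / real k) * ((1 - z ^ k) * inverse (1 - z))"
    using S by (simp add: field_simps)
  have "Ln ((\<Sum>i<k. z ^ i) / of_nat k) = Ln (of_real (1 / real k) * ((1 - z ^ k) * inverse (1 - z)))"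
    using eq by (rule arg_cong)
  also have "\<dots> = Ln (of_real (1 / real k)) + Ln ((1 - z ^ k) * inverse (1 - z))"
    using ne1 ne2 k by (intro Ln_times_of_real) auto
  also have "Ln (of_real (1 / real k)) = of_real (ln (1 / real k))"
    using k by (intro Ln_of_real) auto
  also have "Ln ((1 - z ^ k) * inverse (1 - z)) = Ln (1 - z ^ k) + Ln (inverse (1 - z))"
  proof (rule Ln_times_simple)
    show "-pi < Im (Ln (1 - z ^ k)) + Im (Ln (inverse (1 - z)))"
      using Re_Ln_pos_lt_imp[OF re2] Re_Ln_pos_lt_imp[OF re3] by linarith
    show "Im (Ln (1 - z ^ k)) + Im (Ln (inverse (1 - z))) \<le> pi"
      using Re_Ln_pos_lt_imp[OF re2] Re_Ln_pos_lt_imp[OF re3] by linarith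
  qed (use ne1 ne2 in auto)
  also have "Ln (inverse (1 - z)) = - Ln (1 - z)"
    by (rule Ln_inverse) (use re1 in \<open>auto simp: complex_nonpos_Reals_iff\<close>)
  finally show ?thesis by (simp add: ln_div)
qed

lemma L_sums:
  fixes z :: complex
  assumes k: "k \<ge> 1" and z: "norm z < 1"
  shows "(\<lambda>m. cc k m * z ^ m) sums Ln ((\<Sum>i<k. z ^ i) / of_nat k)"
proof -
  have A: "(\<lambda>m. - (z ^ m / of_nat m)) sums Ln (1 - z)"
    using Ln_series'[of "-z"] z by simp
  have nzk: "norm (z ^ k) < 1" using z k by (simp add: norm_power power_less_one_iff)
  have B0: "(\<lambda>m. - ((z ^ k) ^ m / of_nat m)) sums Ln (1 - z ^ k)"
    using Ln_series'[of "- (z ^ k)"] nzk by simp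
  define f where "f m = (if k dvd m then - (of_nat k / of_nat m) * z ^ m else 0)" for m
  have sm: "strict_mono (\<lambda>m. k * m)" using k by (auto intro!: strict_monoI)
  have "(\<lambda>m. f (k * m)) = (\<lambda>m. - ((z ^ k) ^ m / of_nat m))"
    using k by (auto simp: f_def power_mult fun_eq_iff)
  hence "(\<lambda>m. f (k * m)) sums Ln (1 - z ^ k)" using B0 by simp
  hence B: "f sums Ln (1 - z ^ k)"
    by (subst (asm) sums_mono_reindex[OF sm]) (auto simp: f_def)
  have C: "(\<lambda>m. if m = 0 then - of_real (ln (real k)) else 0) sums (- of_real (ln (real k)) :: complex)"
    using sums_single[of 0 "\<lambda>_. - of_real (ln (real k)) :: complex"] by simp
  have "(\<lambda>m. (if m = 0 then - of_real (ln (real k)) else 0) + f m - - (z ^ m / of_nat m))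
        sums (- of_real (ln (real k)) + Ln (1 - z ^ k) - Ln (1 - z))"
    by (intro sums_add sums_diff A B C)
  also have "(\<lambda>m. (if m = 0 then - of_real (ln (real k)) else 0) + f m - - (z ^ m / of_nat m))
        = (\<lambda>m. cc k m * z ^ m)"
    by (auto simp: fun_eq_iff cc_def f_def field_simps)
  also have "- of_real (ln (real k)) + Ln (1 - z ^ k) - Ln (1 - z) = Ln ((\<Sum>i<k. z ^ i) / of_nat k)"
    using Ln_S_eq[OF k z] by (simp add: algebra_simps)
  finally show ?thesis .
qed

lemma hfun_fps: 
  assumes k: "k \<ge> 1"
  shows "hfun k has_fps_expansion (Abs_fps (cc k) * Abs_fps (\<lambda>_. 1))"
proof -
  have ev: "eventually (\<lambda>z::complex. norm z < 1) (nhds 0)"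
    using eventually_nhds_in_open[of "ball 0 1" 0] by (auto elim!: eventually_mono simp: dist_norm)
  have 1: "(\<lambda>z. Ln ((\<Sum>i<k. z ^ i) / of_nat k)) has_fps_expansion Abs_fps (cc k)"
    by (rule has_fps_expansionI) (use ev L_sums[OF k] in \<open>auto elim!: eventually_mono\<close>)
  have 2: "(\<lambda>z::complex. 1 / (1 - z)) has_fps_expansion Abs_fps (\<lambda>_. 1)"
    by (rule has_fps_expansionI) (use ev geometric_sums in \<open>auto elim!: eventually_mono\<close>)
  have "(\<lambda>z. Ln ((\<Sum>i<k. z ^ i) / of_nat k) * (1 / (1 - z))) has_fps_expansion
          (Abs_fps (cc k) * Abs_fps (\<lambda>_. 1))"
    by (rule has_fps_expansion_mult[OF 1 2])
  also have "(\<lambda>z. Ln ((\<Sum>i<k. z ^ i) / of_nat k) * (1 / (1 - z))) = hfun k"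
    by (simp add: fun_eq_iff hfun_def)
  finally show ?thesis .
qed

definition hr :: "nat \<Rightarrow> nat \<Rightarrow> real" where
  "hr k j = harm j - harm (j div k) - ln (real k)"

lemma cc_partial:
  assumes k: "k \<ge> 1"
  shows "(\<Sum>i=0..j. cc k i) = of_real (hr k j)"
proof (induction j)
  case 0
  then show ?case by (simp add: cc_def hr_def harm_expand)
next
  case (Suc j)
  have "of_real (hr k (Suc j)) = of_real (hr k j) + cc k (Suc j)"
  proof (cases "k dvd Suc j")
    case True
    then obtain q where q: "Suc j = k * q" by auto
    have q1: "q \<ge> 1" using q by (cases q) auto
    have d1: "Suc j div k = q" using q k by simp
    have d2: "j div k = q - 1"
    proof -
      have "j = (k - 1) + (q - 1) * k" using q q1 k
        by (cases q) (auto simp: algebra_simps)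
      hence "j div k = ((k - 1) + (q - 1) * k) div k" by (simp only:)
      also have "\<dots> = (q - 1) + (k - 1) div k" by (rule div_mult_self1) (use k in simp)
      also have "(k - 1) div k = 0" using k by (intro div_less) simp
      finally show ?thesis by simp
    qed
    have hq: "harm q = harm (q - 1) + 1 / real q"
      using q1 harm_Suc[of "q - 1"] by (simp add: inverse_eq_divide)
    have "hr k (Suc j) = hr k j + 1 / real (Suc j) - 1 / real q"
      unfolding hr_def d1 d2 using hq harm_Suc[of j] by (simp add: inverse_eq_divide)
    moreover have "(of_nat k / of_nat (Suc j) :: complex) = 1 / of_nat q"
    proof -
      have "(of_nat (Suc j) :: complex) = of_nat k * of_nat q" by (simp only: q of_nat_mult)
      thus ?thesis using k q1 by (simp add: field_simps)
    qed
    ultimately show ?thesis using True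
      by (simp add: cc_def)
  next
    case False
    have "Suc j div k = j div k" using False by (simp add: div_Suc dvd_eq_mod_eq_0)
    hence "hr k (Suc j) = hr k j + 1 / real (Suc j)"
      unfolding hr_def using harm_Suc[of j] by (simp add: inverse_eq_divide)
    thus ?thesis using False by (simp add: cc_def)
  qed
  thus ?case using Suc by simp
qed

lemma hk_eq:
  assumes k: "k \<ge> 1"
  shows "hk k j = of_real (hr k j)"
proof -
  have "hk k j = fps_nth (Abs_fps (cc k) * Abs_fps (\<lambda>_. 1)) j"
    unfolding hk_def fps_nth_fps_expansion[OF hfun_fps[OF k]] by simp
  also have "\<dots> = (\<Sum>i=0..j. cc k i)" by (simp add: fps_mult_nth)
  finally show ?thesis using cc_partial[OF k] by simp
qed




lemma em_err:
  assumes "n \<ge> 1"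
  shows "harm n - ln (real n + 1) - euler_mascheroni \<in> {- 1 / (2 * real n) .. 0}"
  using euler_mascheroni_bounds[OF assms] assms by (auto simp: field_simps)

lemma hr_bound:
  assumes k: "k \<ge> 1" and j: "j \<ge> k"
  shows "\<bar>hr k j\<bar> \<le> 4 * real k / real j"
proof -
  define q where "q = j div k"
  have "k div k \<le> j div k" by (rule div_le_mono[OF j])
  hence q1: "q \<ge> 1" using k by (simp add: q_def)
  have e1: "j = q * k + j mod k" by (simp add: q_def)
  have e2: "j mod k < k" using k by simp
  have jq1: "real k * real q \<le> real j" using e1 e2 by (metis le_add1 mult.commute of_nat_le_iff of_nat_mult)
  have jq2: "real j + 1 \<le> real k * (real q + 1)"
  proof -
    have "j + 1 \<le> q * k + k" using e1 e2 by linarith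
    hence "real (j + 1) \<le> real (q * k + k)" by (simp only: of_nat_le_iff)
    thus ?thesis by (simp add: algebra_simps)
  qed
  have kr: "real k \<ge> 1" using k by simp
  have qr: "real q \<ge> 1" using q1 by simp
  have "1 * real q \<le> real k * real q" using qr by (intro mult_right_mono[OF kr]) auto
  hence qj: "real q \<le> real j" using jq1 by linarith
  have jr: "real j \<ge> 1" using qj qr by linarith
  have j1: "j \<ge> 1" using jr by simp
  have Ej: "- 1 / (2 * real j) \<le> harm j - ln (real j + 1) - euler_mascheroni"
     "harm j - ln (real j + 1) - euler_mascheroni \<le> 0"
    using em_err[OF j1] by auto
  have Eq: "- 1 / (2 * real q) \<le> harm q - ln (real q + 1) - euler_mascheroni"
     "harm q - ln (real q + 1) - euler_mascheroni \<le> 0"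
    using em_err[OF q1] by auto
  have ln_kq1: "ln (real k * (real q + 1)) = ln (real k) + ln (real q + 1)"
    using kr qr by (simp add: ln_mult)
  have ln_kq: "ln (real k * real q) = ln (real k) + ln (real q)"
    using kr qr by (simp add: ln_mult)
  have D1: "ln (real j + 1) \<le> ln (real k * (real q + 1))"
    using jq2 jr by simp
  have D2: "ln (real k * real q) \<le> ln (real j + 1)"
    using jq1 kr qr by simp
  have D3: "ln (real q + 1) - ln (real q) < 1 / real q"
    using ln_diff_le_inverse[OF qr] .
  have jq3: "1 / (2 * real j) \<le> 1 / (2 * real q)"
    using qj qr by (simp add: frac_le)
  have hr_eq: "hr k j = (harm j - ln (real j + 1) - euler_mascheroni)
      - (harm q - ln (real q + 1) - euler_mascheroni) + (ln (real j + 1) - ln (real q + 1) - ln (real k))"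
    by (simp add: hr_def q_def)
  have H: "\<bar>hr k j\<bar> \<le> 2 / real q"
  proof -
    have h2: "1 / (2 * real q) = (1 / real q) / 2" by simp
    have h3: "2 / real q = 2 * (1 / real q)" by simp
    have t: "1 / real q > 0" using qr by simp
    have h4: "- 1 / (2 * real j) = - (1 / (2 * real j))" by simp
    have h5: "- 1 / (2 * real q) = - (1 / (2 * real q))" by simp
    show ?thesis unfolding hr_eq abs_le_iff h3
      using Ej Eq D1 D2 D3 jq3 ln_kq ln_kq1 h2 t h4 h5 by linarith
  qed
  have "real k * 1 \<le> real k * real q" using qr kr by (intro mult_left_mono) auto
  hence "real j \<le> 2 * real k * real q" using jq2 by (simp add: algebra_simps)
  hence "4 * real k / (2 * real k * real q) \<le> 4 * real k / real j"
    using qr jr kr by (intro frac_le) auto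
  moreover have "4 * real k / (2 * real k * real q) = 2 / real q" using kr by simp
  ultimately have "2 / real q \<le> 4 * real k / real j" by simp
  with H show ?thesis by linarith
qed

lemma hr_H2:
  assumes k: "k \<ge> 1"
  shows "summable (\<lambda>j. (hr k j)\<^sup>2)"
proof (rule summable_comparison_test')
  show "summable (\<lambda>j. (4 * real k)\<^sup>2 * inverse (real j ^ 2))"
    by (intro summable_mult inverse_power_summable) auto
  fix j assume j: "j \<ge> k"
  have jr: "real j > 0" using j k by simp
  have "\<bar>hr k j\<bar> \<le> 4 * real k / real j" by (rule hr_bound[OF k j])
  hence "\<bar>hr k j\<bar>\<^sup>2 \<le> (4 * real k / real j)\<^sup>2"
    by (intro power_mono) auto
  thus "norm ((hr k j)\<^sup>2) \<le> (4 * real k)\<^sup>2 * inverse (real j ^ 2)"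
    by (simp add: power_mult_distrib power_inverse divide_inverse)
qed



definition Ws :: "nat \<Rightarrow> (nat \<Rightarrow> complex) \<Rightarrow> (nat \<Rightarrow> complex)" where
  "Ws n g = (\<lambda>j. \<Sum>i<n. g (n * j + i))"

lemma H2_iff: "x \<in> H2 \<longleftrightarrow> summable (\<lambda>j. (cmod (x j))\<^sup>2)"
  by (simp add: H2_def)

lemma H2_zero: "(\<lambda>_. 0) \<in> H2"
  by (simp add: H2_def)

lemma H2_add:
  assumes "x \<in> H2" "y \<in> H2"
  shows "(\<lambda>j. x j + y j) \<in> H2"
  unfolding H2_iff
proof (rule summable_comparison_test')
  show "summable (\<lambda>j. 2 * (cmod (x j))\<^sup>2 + 2 * (cmod (y j))\<^sup>2)"
    using assms by (intro summable_add summable_mult) (auto simp: H2_iff)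
  fix j :: nat
  have "cmod (x j + y j) \<le> cmod (x j) + cmod (y j)" by (rule norm_triangle_ineq)
  hence "(cmod (x j + y j))\<^sup>2 \<le> (cmod (x j) + cmod (y j))\<^sup>2" by (intro power_mono) auto
  also have "\<dots> \<le> 2 * (cmod (x j))\<^sup>2 + 2 * (cmod (y j))\<^sup>2"
  proof -
    have "0 \<le> (cmod (x j) - cmod (y j))\<^sup>2" by simp
    thus ?thesis unfolding power2_diff power2_sum by linarith
  qed
  finally show "norm ((cmod (x j + y j))\<^sup>2) \<le> 2 * (cmod (x j))\<^sup>2 + 2 * (cmod (y j))\<^sup>2" by simp
qed

lemma H2_cmult:
  assumes "x \<in> H2"
  shows "(\<lambda>j. c * x j) \<in> H2"
  using summable_mult[of "\<lambda>j. (cmod (x j))\<^sup>2" "(cmod c)\<^sup>2"] assms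
  by (simp add: H2_iff norm_mult power_mult_distrib)

lemma H2_diff:
  assumes "x \<in> H2" "y \<in> H2"
  shows "(\<lambda>j. x j - y j) \<in> H2"
  using H2_add[OF assms(1) H2_cmult[OF assms(2), of "-1"]] by simp

lemma H2_sum:
  assumes "finite S" "\<And>k. k \<in> S \<Longrightarrow> x k \<in> H2"
  shows "(\<lambda>j. \<Sum>k\<in>S. c k * x k j) \<in> H2"
  using assms
proof (induction S rule: finite_induct)
  case empty
  then show ?case by (simp add: H2_zero)
next
  case (insert a S)
  have "(\<lambda>j. c a * x a j + (\<Sum>k\<in>S. c k * x k j)) \<in> H2"
    using insert by (intro H2_add H2_cmult) auto
  thus ?case using insert by simp
qed

lemma inner_abs_summable:
  assumes "x \<in> H2" "y \<in> H2"
  shows "summable (\<lambda>j. norm (x j * cnj (y j)))"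
proof (rule summable_comparison_test')
  show "summable (\<lambda>j. (cmod (x j))\<^sup>2 + (cmod (y j))\<^sup>2)"
    using assms by (intro summable_add) (auto simp: H2_iff)
  fix j :: nat
  have "cmod (x j) * cmod (y j) \<le> (cmod (x j))\<^sup>2 + (cmod (y j))\<^sup>2"
  proof -
    have "0 \<le> (cmod (x j) - cmod (y j))\<^sup>2" by simp
    moreover have "0 \<le> cmod (x j) * cmod (y j)" by simp
    ultimately show ?thesis unfolding power2_diff by linarith
  qed
  thus "norm (norm (x j * cnj (y j))) \<le> (cmod (x j))\<^sup>2 + (cmod (y j))\<^sup>2"
    by (simp add: norm_mult)
qed

lemma inner_summable:
  assumes "x \<in> H2" "y \<in> H2"
  shows "summable (\<lambda>j. x j * cnj (y j))"
  by (rule summable_norm_cancel[OF inner_abs_summable[OF assms]])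

lemma inner_sum_left:
  assumes "finite S" "\<And>k. k \<in> S \<Longrightarrow> x k \<in> H2" "y \<in> H2"
  shows "h2inner (\<lambda>j. \<Sum>k\<in>S. c k * x k j) y = (\<Sum>k\<in>S. c k * h2inner (x k) y)"
proof -
  have "h2inner (\<lambda>j. \<Sum>k\<in>S. c k * x k j) y = (\<Sum>j. \<Sum>k\<in>S. c k * (x k j * cnj (y j)))"
    unfolding h2inner_def by (simp add: sum_distrib_right mult.assoc)
  also have "\<dots> = (\<Sum>k\<in>S. \<Sum>j. c k * (x k j * cnj (y j)))"
    using assms by (intro suminf_sum summable_mult inner_summable) auto
  also have "\<dots> = (\<Sum>k\<in>S. c k * h2inner (x k) y)"
    unfolding h2inner_def using assms
    by (intro sum.cong refl suminf_mult inner_summable) auto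
  finally show ?thesis .
qed

lemma inner_sum_right:
  assumes "finite S" "\<And>k. k \<in> S \<Longrightarrow> y k \<in> H2" "x \<in> H2"
  shows "h2inner x (\<lambda>j. \<Sum>k\<in>S. c k * y k j) = (\<Sum>k\<in>S. cnj (c k) * h2inner x (y k))"
proof -
  have "h2inner x (\<lambda>j. \<Sum>k\<in>S. c k * y k j) = (\<Sum>j. \<Sum>k\<in>S. cnj (c k) * (x j * cnj (y k j)))"
    unfolding h2inner_def by (simp add: sum_distrib_left cnj_sum mult_ac)
  also have "\<dots> = (\<Sum>k\<in>S. \<Sum>j. cnj (c k) * (x j * cnj (y k j)))"
    using assms by (intro suminf_sum summable_mult inner_summable) auto
  also have "\<dots> = (\<Sum>k\<in>S. cnj (c k) * h2inner x (y k))"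
    unfolding h2inner_def using assms
    by (intro sum.cong refl suminf_mult inner_summable) auto
  finally show ?thesis .
qed

lemma inner_diff_right:
  assumes "x \<in> H2" "y \<in> H2" "z \<in> H2"
  shows "h2inner x (\<lambda>j. y j - z j) = h2inner x y - h2inner x z"
proof -
  have "h2inner x (\<lambda>j. y j - z j) = (\<Sum>j. x j * cnj (y j) - x j * cnj (z j))"
    unfolding h2inner_def by (simp add: algebra_simps)
  also have "\<dots> = h2inner x y - h2inner x z"
    unfolding h2inner_def using assms by (intro suminf_diff[symmetric] inner_summable) auto
  finally show ?thesis .
qed

lemma inner_zero_right: "h2inner x (\<lambda>_. 0) = 0"
  by (simp add: h2inner_def)

lemma W_iter: "(W n ^^ k) h m = h (m div n ^ k)"
  by (induction k arbitrary: m) (simp_all add: W_def div_mult2_eq mult.commute)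

lemma block_div:
  fixes m j n :: nat
  assumes "m \<in> {j * n..<j * n + n}"
  shows "m div n = j"
proof -
  have i: "m - j * n < n" "m = (m - j * n) + j * n" using assms by auto
  have n0: "n \<noteq> 0" using assms by auto
  have "m div n = ((m - j * n) + j * n) div n" using i(2) by simp
  also have "\<dots> = j + (m - j * n) div n" using n0 by (rule div_mult_self1)
  also have "(m - j * n) div n = 0" using i(1) by (rule div_less)
  finally show ?thesis by simp
qed

lemma W_H2:
  assumes n: "n \<ge> 1" and x: "x \<in> H2"
  shows "W n x \<in> H2"
  unfolding H2_iff
proof (rule summableI_nonneg_bounded)
  fix N :: nat
  let ?f = "\<lambda>m. (cmod (W n x m))\<^sup>2"
  have "(\<Sum>m<N. ?f m) \<le> (\<Sum>m<N * n. ?f m)"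
    using n by (intro sum_mono2) auto
  also have "\<dots> = (\<Sum>j<N. sum ?f {j * n..<j * n + n})"
    by (rule sum.nat_group[symmetric])
  also have "\<dots> = (\<Sum>j<N. real n * (cmod (x j))\<^sup>2)"
  proof (intro sum.cong refl)
    fix j assume "j \<in> {..<N}"
    have "sum ?f {j * n..<j * n + n} = sum (\<lambda>_. (cmod (x j))\<^sup>2) {j * n..<j * n + n}"
      by (intro sum.cong refl) (simp add: W_def block_div)
    thus "sum ?f {j * n..<j * n + n} = real n * (cmod (x j))\<^sup>2" by simp
  qed
  also have "\<dots> = real n * (\<Sum>j<N. (cmod (x j))\<^sup>2)" by (simp add: sum_distrib_left)
  also have "\<dots> \<le> real n * (\<Sum>j. (cmod (x j))\<^sup>2)"
    using x by (intro mult_left_mono sum_le_suminf) (auto simp: H2_iff)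
  finally show "(\<Sum>m<N. ?f m) \<le> real n * (\<Sum>j. (cmod (x j))\<^sup>2)" .
qed auto

lemma block_sum:
  fixes j n :: nat
  shows "sum f {j * n..<j * n + n} = (\<Sum>i<n. f (n * j + i))"
proof -
  have "sum f {j * n..<j * n + n} = sum f {0 + j * n..<n + j * n}" by (simp add: add.commute)
  also have "\<dots> = (\<Sum>i=0..<n. f (i + j * n))" by (rule sum.shift_bounds_nat_ivl)
  also have "\<dots> = (\<Sum>i<n. f (n * j + i))" by (simp add: atLeast0LessThan algebra_simps)
  finally show ?thesis .
qed

lemma Ws_H2:
  assumes n: "n \<ge> 1" and g: "g \<in> H2"
  shows "Ws n g \<in> H2"
  unfolding H2_iff
proof (rule summable_comparison_test')
  let ?f = "\<lambda>m. (cmod (g m))\<^sup>2"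
  have "(\<lambda>j. sum ?f {j * n..<j * n + n}) sums (\<Sum>m. ?f m)"
    using g n by (intro sums_group summable_sums) (auto simp: H2_iff)
  hence "summable (\<lambda>j. sum ?f {j * n..<j * n + n})" by (rule sums_summable)
  thus "summable (\<lambda>j. real n * (\<Sum>i<n. ?f (n * j + i)))"
    by (intro summable_mult) (simp add: block_sum)
  fix j :: nat
  have "cmod (Ws n g j) \<le> (\<Sum>i<n. cmod (g (n * j + i)))"
    unfolding Ws_def by (rule norm_sum)
  hence "(cmod (Ws n g j))\<^sup>2 \<le> (\<Sum>i<n. cmod (g (n * j + i)))\<^sup>2"
    by (intro power_mono) auto
  also have "\<dots> = (\<Sum>i<n. 1 * cmod (g (n * j + i)))\<^sup>2" by simp
  also have "\<dots> \<le> (\<Sum>i<n. 1\<^sup>2) * (\<Sum>i<n. (cmod (g (n * j + i)))\<^sup>2)"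
    by (rule Cauchy_Schwarz_ineq_sum)
  also have "\<dots> = real n * (\<Sum>i<n. ?f (n * j + i))" by simp
  finally show "norm ((cmod (Ws n g j))\<^sup>2) \<le> real n * (\<Sum>i<n. ?f (n * j + i))" by simp
qed

lemma adjoint:
  assumes n: "n \<ge> 1" and f: "f \<in> H2" and g: "g \<in> H2"
  shows "h2inner (W n f) g = h2inner f (Ws n g)"
proof -
  let ?s = "\<lambda>m. W n f m * cnj (g m)"
  have "summable ?s" using W_H2[OF n f] g by (rule inner_summable)
  hence "(\<lambda>j. sum ?s {j * n..<j * n + n}) sums (\<Sum>m. ?s m)"
    using n by (intro sums_group summable_sums) auto
  also have "(\<lambda>j. sum ?s {j * n..<j * n + n}) = (\<lambda>j. f j * cnj (Ws n g j))"
  proof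
    fix j
    have "sum ?s {j * n..<j * n + n} = sum (\<lambda>m. f j * cnj (g m)) {j * n..<j * n + n}"
      by (intro sum.cong refl) (simp add: W_def block_div)
    also have "\<dots> = f j * cnj (Ws n g j)"
      by (simp add: block_sum[of "\<lambda>m. f j * cnj (g m)"] Ws_def sum_distrib_left cnj_sum)
    finally show "sum ?s {j * n..<j * n + n} = f j * cnj (Ws n g j)" .
  qed
  finally show ?thesis unfolding h2inner_def by (simp add: sums_iff)
qed

lemma inner_delta: "h2inner (\<lambda>m. if m = j then 1 else 0) h = cnj (h j)"
proof -
  have "(\<lambda>m. (if m = j then 1 else 0) * cnj (h m)) = (\<lambda>m. if m = j then cnj (h m) else 0)"
    by auto
  thus ?thesis unfolding h2inner_def using sums_single[of j "\<lambda>m. cnj (h m)"]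
    by (simp add: sums_iff)
qed

lemma delta_H2: "(\<lambda>m. if m = j then 1 else 0 :: complex) \<in> H2"
proof -
  have "(\<lambda>m. (cmod (if m = j then 1 else 0 :: complex))\<^sup>2) = (\<lambda>m. if m = j then 1 else 0)"
    by auto
  thus ?thesis unfolding H2_iff by simp
qed

lemma Wstar_eq:
  assumes n: "n \<ge> 1" and g: "g \<in> H2"
  shows "Wstar n g = Ws n g"
  unfolding Wstar_def
proof (rule the_equality)
  show "Ws n g \<in> H2 \<and> (\<forall>f\<in>H2. h2inner (W n f) g = h2inner f (Ws n g))"
    using Ws_H2[OF n g] adjoint[OF n _ g] by auto
  fix h assume h: "h \<in> H2 \<and> (\<forall>f\<in>H2. h2inner (W n f) g = h2inner f h)"
  show "h = Ws n g"
  proof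
    fix j
    have "cnj (h j) = h2inner (\<lambda>m. if m = j then 1 else 0) h" by (simp add: inner_delta)
    also have "\<dots> = h2inner (W n (\<lambda>m. if m = j then 1 else 0)) g" using h delta_H2 by auto
    also have "\<dots> = h2inner (\<lambda>m. if m = j then 1 else 0) (Ws n g)"
      using adjoint[OF n delta_H2 g] .
    also have "\<dots> = cnj (Ws n g j)" by (simp add: inner_delta)
    finally show "h j = Ws n g j" by simp
  qed
qed

lemma Ws_iter_H2:
  assumes n: "n \<ge> 1" and g: "g \<in> H2"
  shows "(Ws n ^^ k) g \<in> H2"
  by (induction k) (simp_all add: g Ws_H2[OF n])

lemma W_iter_H2:
  assumes n: "n \<ge> 1" and g: "g \<in> H2"
  shows "(W n ^^ k) g \<in> H2"
  by (induction k) (simp_all add: g W_H2[OF n])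

lemma Wstar_iter:
  assumes n: "n \<ge> 1" and g: "g \<in> H2"
  shows "(Wstar n ^^ k) g = (Ws n ^^ k) g"
  by (induction k) (simp_all add: Wstar_eq[OF n] Ws_iter_H2[OF n g])

lemma adjoint_iter:
  assumes n: "n \<ge> 1" and f: "f \<in> H2" and g: "g \<in> H2"
  shows "h2inner ((W n ^^ k) f) g = h2inner f ((Ws n ^^ k) g)"
  using f
proof (induction k arbitrary: f)
  case 0
  then show ?case by simp
next
  case (Suc k)
  have "h2inner ((W n ^^ Suc k) f) g = h2inner ((W n ^^ k) (W n f)) g"
    by (simp add: funpow_Suc_right del: funpow.simps)
  also have "\<dots> = h2inner (W n f) ((Ws n ^^ k) g)" by (rule Suc.IH[OF W_H2[OF n Suc.prems]])
  also have "\<dots> = h2inner f (Ws n ((Ws n ^^ k) g))"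
    by (rule adjoint[OF n Suc.prems Ws_iter_H2[OF n g]])
  finally show ?case by simp
qed

lemma Ws_lin:
  "Ws n (\<lambda>i. \<Sum>k\<in>S. c k * x k i) = (\<lambda>i. \<Sum>k\<in>S. c k * Ws n (x k) i)"
proof (rule ext)
  fix j
  have "(\<Sum>i<n. \<Sum>k\<in>S. c k * x k (n * j + i)) = (\<Sum>k\<in>S. \<Sum>i<n. c k * x k (n * j + i))"
    by (rule sum.swap)
  thus "Ws n (\<lambda>i. \<Sum>k\<in>S. c k * x k i) j = (\<Sum>k\<in>S. c k * Ws n (x k) j)"
    by (simp add: Ws_def sum_distrib_left)
qed

lemma Ws_iter_lin:
  "(Ws n ^^ j) (\<lambda>i. \<Sum>k\<in>S. c k * x k i) = (\<lambda>i. \<Sum>k\<in>S. c k * (Ws n ^^ j) (x k) i)"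
proof (induction j)
  case 0
  then show ?case by simp
next
  case (Suc j)
  have "(Ws n ^^ Suc j) (\<lambda>i. \<Sum>k\<in>S. c k * x k i) = Ws n ((Ws n ^^ j) (\<lambda>i. \<Sum>k\<in>S. c k * x k i))"
    by simp
  also have "\<dots> = Ws n (\<lambda>i. \<Sum>k\<in>S. c k * (Ws n ^^ j) (x k) i)" by (simp only: Suc.IH)
  also have "\<dots> = (\<lambda>i. \<Sum>k\<in>S. c k * Ws n ((Ws n ^^ j) (x k)) i)" by (rule Ws_lin)
  finally show ?case by simp
qed



lemma inner_cnj:
  assumes "x \<in> H2" "y \<in> H2"
  shows "h2inner y x = cnj (h2inner x y)"
proof -
  have "(\<lambda>j. x j * cnj (y j)) sums h2inner x y"
    unfolding h2inner_def using assms by (intro summable_sums inner_summable)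
  hence "(\<lambda>j. cnj (x j * cnj (y j))) sums cnj (h2inner x y)" by (simp only: sums_cnj)
  hence "(\<lambda>j. y j * cnj (x j)) sums cnj (h2inner x y)" by (simp add: mult.commute)
  thus ?thesis unfolding h2inner_def by (simp add: sums_iff)
qed

lemma norm_sq_expand:
  "(cmod (a - b))\<^sup>2 = (cmod a)\<^sup>2 + (cmod b)\<^sup>2 - 2 * Re (a * cnj b)"
  unfolding cmod_power2 by (simp add: power2_eq_square algebra_simps)

lemma norm_orth:
  assumes x: "x \<in> H2" and y: "y \<in> H2" and o: "h2inner x y = 0"
  shows "h2norm y \<le> h2norm (\<lambda>i. x i - y i)"
proof -
  have sx: "(\<lambda>j. (cmod (x j))\<^sup>2) sums (\<Sum>j. (cmod (x j))\<^sup>2)"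
    using x by (intro summable_sums) (simp add: H2_iff)
  have sy: "(\<lambda>j. (cmod (y j))\<^sup>2) sums (\<Sum>j. (cmod (y j))\<^sup>2)"
    using y by (intro summable_sums) (simp add: H2_iff)
  have si0: "(\<lambda>j. x j * cnj (y j)) sums (\<Sum>j. x j * cnj (y j))"
    by (rule summable_sums[OF inner_summable[OF x y]])
  have si: "(\<lambda>j. x j * cnj (y j)) sums 0"
    using si0 o unfolding h2inner_def by simp
  have "(\<lambda>j. (cmod (x j))\<^sup>2 + (cmod (y j))\<^sup>2 - 2 * Re (x j * cnj (y j))) sums
        ((\<Sum>j. (cmod (x j))\<^sup>2) + (\<Sum>j. (cmod (y j))\<^sup>2) - 2 * Re 0)"
    by (intro sums_add sums_diff sums_mult sums_Re sx sy si)
  hence "(\<lambda>j. (cmod (x j - y j))\<^sup>2) sums ((\<Sum>j. (cmod (x j))\<^sup>2) + (\<Sum>j. (cmod (y j))\<^sup>2))"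
    by (simp add: norm_sq_expand)
  hence eq: "(\<Sum>j. (cmod (x j - y j))\<^sup>2) = (\<Sum>j. (cmod (x j))\<^sup>2) + (\<Sum>j. (cmod (y j))\<^sup>2)"
    by (simp add: sums_iff)
  have "0 \<le> (\<Sum>j. (cmod (x j))\<^sup>2)"
    using x by (intro suminf_nonneg) (auto simp: H2_iff)
  hence "(\<Sum>j. (cmod (y j))\<^sup>2) \<le> (\<Sum>j. (cmod (x j - y j))\<^sup>2)" using eq by linarith
  thus ?thesis unfolding h2norm_def by simp
qed

lemma h2norm_zero:
  assumes "u \<in> H2" "h2norm u = 0"
  shows "u = (\<lambda>_. 0)"
proof -
  have "(\<Sum>j. (cmod (u j))\<^sup>2) = 0" using assms(2) unfolding h2norm_def by simp
  hence "\<forall>j. (cmod (u j))\<^sup>2 = 0"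
    using assms(1) by (subst (asm) suminf_eq_zero_iff) (auto simp: H2_iff)
  thus ?thesis by auto
qed

definition Wp :: "nat \<Rightarrow> complex poly \<Rightarrow> (nat \<Rightarrow> complex) \<Rightarrow> (nat \<Rightarrow> complex)" where
  "Wp n q h = (\<lambda>m. \<Sum>k\<le>degree q. coeff q k * h (m div n ^ k))"

lemma Wp_bound:
  assumes "degree q \<le> N"
  shows "Wp n q h m = (\<Sum>k\<le>N. coeff q k * h (m div n ^ k))"
  unfolding Wp_def
  by (rule sum.mono_neutral_left) (use assms in \<open>auto simp: coeff_eq_0\<close>)

lemma Wp_add: "Wp n (p + q) h m = Wp n p h m + Wp n q h m"
proof -
  let ?N = "max (degree p) (degree q)"
  have d: "degree (p + q) \<le> ?N" by (rule degree_add_le) auto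
  show ?thesis
    by (simp add: Wp_bound[OF d] Wp_bound[of p ?N] Wp_bound[of q ?N] sum.distrib algebra_simps)
qed

lemma Wp_smult: "Wp n (smult c p) h m = c * Wp n p h m"
proof -
  have d: "degree (smult c p) \<le> degree p" by (rule degree_smult_le)
  show ?thesis
    by (simp add: Wp_bound[OF d] Wp_def sum_distrib_left mult.assoc)
qed

lemma Wp_pCons0: "Wp n (pCons 0 p) h m = W n (Wp n p h) m"
proof -
  have d: "degree (pCons 0 p) \<le> Suc (degree p)" by (simp add: degree_pCons_le)
  have "Wp n (pCons 0 p) h m = (\<Sum>k\<le>Suc (degree p). coeff (pCons 0 p) k * h (m div n ^ k))"
    by (rule Wp_bound[OF d])
  also have "\<dots> = (\<Sum>k\<le>degree p. coeff p k * h (m div n ^ Suc k))"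
    by (subst sum.atMost_Suc_shift) simp
  also have "\<dots> = W n (Wp n p h) m"
    by (simp add: W_def Wp_def div_mult2_eq)
  finally show ?thesis .
qed

lemma Wp_H2:
  assumes n: "n \<ge> 1" and h: "h \<in> H2"
  shows "Wp n q h \<in> H2"
proof -
  have "Wp n q h = (\<lambda>m. \<Sum>k\<in>{..degree q}. coeff q k * (W n ^^ k) h m)"
    by (simp add: Wp_def W_iter)
  also have "\<dots> \<in> H2" using W_iter_H2[OF n h] by (intro H2_sum) auto
  finally show ?thesis .
qed

lemma no_eig:
  assumes n: "n \<ge> 2" and u: "u \<in> H2" and e: "\<And>m. u (m div n) = z * u m"
  shows "u = (\<lambda>_. 0)"
proof (cases "z = 1")
  case True
  have c: "u m = u 0" for m
  proof (induction m rule: less_induct)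
    case (less m)
    show ?case
    proof (cases "m = 0")
      case False
      hence "m div n < m" using n by simp
      hence "u (m div n) = u 0" by (rule less.IH)
      thus ?thesis using e[of m] True by simp
    qed simp
  qed
  have "(\<lambda>j. (cmod (u j))\<^sup>2) = (\<lambda>_. (cmod (u 0))\<^sup>2)" proof (rule ext)
    fix j show "(cmod (u j))\<^sup>2 = (cmod (u 0))\<^sup>2" using c[of j] by simp
  qed
  hence "summable (\<lambda>_. (cmod (u 0))\<^sup>2)" using u by (simp add: H2_iff)
  hence "u 0 = 0" by (simp add: summable_const_iff)
  thus ?thesis using c by auto
next
  case False
  have u0: "u 0 = 0" using e[of 0] False by simp
  show ?thesis
  proof (cases "z = 0")
    case True
    have "u j = 0" for j using e[of "j * n"] n True by simp
    thus ?thesis by auto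
  next
    case z0: False
    have "u m = 0" for m
    proof (induction m rule: less_induct)
      case (less m)
      show ?case
      proof (cases "m = 0")
        case False
        hence "m div n < m" using n by simp
        hence "u (m div n) = 0" by (rule less.IH)
        thus ?thesis using e[of m] z0 by simp
      qed (simp add: u0)
    qed
    thus ?thesis by auto
  qed
qed

lemma Wp_inj:
  assumes n: "n \<ge> 2" and h: "h \<in> H2" and q: "q \<noteq> 0" and z: "Wp n q h = (\<lambda>_. 0)"
  shows "h = (\<lambda>_. 0)"
  using q z
proof (induction "degree q" arbitrary: q rule: less_induct)
  case less
  show ?case
  proof (cases "degree q = 0")
    case True
    then obtain c where qc: "q = [:c:]" by (metis degree_eq_zeroE)
    with less.prems have c0: "c \<noteq> 0" by auto
    have "c * h m = 0" for m
      using fun_cong[OF less.prems(2), of m] by (simp add: Wp_def qc)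
    thus ?thesis using c0 by auto
  next
    case False
    hence "\<not> constant (poly q)" by (simp add: constant_degree)
    then obtain a where "poly q a = 0"
      using Fundamental_Theorem_Algebra.fundamental_theorem_of_algebra by blast
    then obtain r where qr: "q = [:-a, 1:] * r" by (auto simp: poly_eq_0_iff_dvd elim!: dvdE)
    have r0: "r \<noteq> 0" using qr less.prems by auto
    have "degree q = degree ([:-a, 1:] * r)" using qr by (rule arg_cong)
    also have "\<dots> = degree [:-a, 1:] + degree r" using r0 by (intro degree_mult_eq) auto
    finally have dr: "degree q = degree r + 1" by simp
    have qeq: "q = smult (-a) r + pCons 0 r" using qr by simp
    have ex: "Wp n q h m = - a * Wp n r h m + W n (Wp n r h) m" for m
      unfolding qeq Wp_add Wp_smult Wp_pCons0 by simp
    have e: "W n (Wp n r h) m = a * Wp n r h m" for m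
    proof -
      have "W n (Wp n r h) m = Wp n q h m + a * Wp n r h m" by (simp add: ex[of m])
      thus ?thesis using fun_cong[OF less.prems(2), of m] by simp
    qed
    have "Wp n r h = (\<lambda>_. 0)"
      using n Wp_H2[of n h r] h e by (intro no_eig[of n _ a]) (auto simp: W_def)
    thus ?thesis using less.hyps[of r] dr r0 by simp
  qed
qed



definition Aseq :: "nat \<Rightarrow> nat \<Rightarrow> complex" where
  "Aseq k = (\<lambda>j. of_real (hr k j))"

lemma Aseq_H2: "k \<ge> 1 \<Longrightarrow> Aseq k \<in> H2"
  using hr_H2[of k] by (simp add: H2_iff Aseq_def)

lemma Aseq_1: "Aseq 1 = (\<lambda>_. 0)"
  by (simp add: Aseq_def hr_def)

lemma Aseq_Suc0: "Aseq (Suc 0) = (\<lambda>_. 0)"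
  using Aseq_1 by simp

lemma Aseq_hk: "k \<ge> 1 \<Longrightarrow> hk k = Aseq k"
  by (simp add: fun_eq_iff Aseq_def hk_eq)

lemma W_iter_A2:
  assumes n: "n \<ge> 1"
  shows "(W n ^^ j) (Aseq 2) = (\<lambda>m. Aseq (2 * n ^ j) m - Aseq (n ^ j) m)"
proof
  fix m
  have p: "real n ^ j > 0" using n by simp
  have l: "ln (2 * real n ^ j) = ln 2 + ln (real n ^ j)" using p by (simp add: ln_mult)
  have d: "m div (2 * n ^ j) = m div n ^ j div 2"
  proof -
    have "m div (2 * n ^ j) = m div (n ^ j * 2)" by (simp only: mult.commute)
    also have "\<dots> = m div n ^ j div 2" by (rule div_mult2_eq)
    finally show ?thesis .
  qed
  show "(W n ^^ j) (Aseq 2) m = Aseq (2 * n ^ j) m - Aseq (n ^ j) m"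
    by (simp add: W_iter Aseq_def hr_def d l)
qed

lemma in_Nspan: "k \<ge> 2 \<Longrightarrow> hk k \<in> Nspan"
proof -
  assume k: "k \<ge> 2"
  show "hk k \<in> Nspan" unfolding Nspan_def mem_Collect_eq
    by (rule exI[of _ "{k}"], rule exI[of _ "\<lambda>_. 1"]) (use k in simp)
qed

theorem mainTheorem20:
  fixes n :: nat and f :: "nat \<Rightarrow> complex"
  assumes "n \<ge> 2"
    and "hypercyclic (Wstar n) f"
  shows "Nperp \<inter> Zorb (Wstar n) f = {(\<lambda>_. 0)}"
proof
  have n: "n \<ge> 2" by fact
  have n1: "n \<ge> 1" using n by simp
  have fH: "f \<in> H2" using assms(2) by (simp add: hypercyclic_def)
  have dens: "\<And>g e. g \<in> H2 \<Longrightarrow> e > 0 \<Longrightarrow> \<exists>j. h2norm (\<lambda>i. (Wstar n ^^ j) f i - g i) < e"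
    using assms(2) by (simp add: hypercyclic_def)
  show "{(\<lambda>_. 0)} \<subseteq> Nperp \<inter> Zorb (Wstar n) f"
  proof -
    have "(\<lambda>_. 0) \<in> Nperp" unfolding Nperp_def using H2_zero by (simp add: h2inner_def)
    moreover have "(\<lambda>_. 0) \<in> Zorb (Wstar n) f"
    proof -
      have "(\<lambda>_. 0) = (\<lambda>i. \<Sum>k\<le>degree (0::complex poly). coeff 0 k * (Wstar n ^^ k) f i)" by simp
      thus ?thesis unfolding Zorb_def by blast
    qed
    ultimately show ?thesis by simp
  qed
  show "Nperp \<inter> Zorb (Wstar n) f \<subseteq> {(\<lambda>_. 0)}"
  proof
    fix g assume g: "g \<in> Nperp \<inter> Zorb (Wstar n) f"
    then obtain p where gp: "g = (\<lambda>i. \<Sum>k\<le>degree p. coeff p k * (Wstar n ^^ k) f i)"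
      unfolding Zorb_def by blast
    define F where "F k = (Ws n ^^ k) f" for k
    have FH: "F k \<in> H2" for k unfolding F_def by (rule Ws_iter_H2[OF n1 fH])
    define d where "d = degree p"
    define c where "c = coeff p"
    have g2: "g = (\<lambda>i. \<Sum>k\<in>{..d}. c k * F k i)"
      unfolding gp d_def c_def F_def using Wstar_iter[OF n1 fH] by simp
    have gH: "g \<in> H2" using g by (simp add: Nperp_def)
    have orth: "h2inner g (hk a) = 0" if "a \<ge> 2" for a
      using g in_Nspan[OF that] by (simp add: Nperp_def)
    have A2H: "Aseq 2 \<in> H2" by (rule Aseq_H2) simp
    have WAH: "(W n ^^ k) (Aseq 2) \<in> H2" for k by (rule W_iter_H2[OF n1 A2H])
    have orthW: "h2inner g ((W n ^^ j) (Aseq 2)) = 0" for j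
    proof -
      have a1: "2 * n ^ j \<ge> 2" using n1 by simp
      have "h2inner g ((W n ^^ j) (Aseq 2)) = h2inner g (Aseq (2 * n ^ j)) - h2inner g (Aseq (n ^ j))"
        unfolding W_iter_A2[OF n1] using n1 by (intro inner_diff_right gH Aseq_H2) auto
      also have "h2inner g (Aseq (2 * n ^ j)) = 0"
        using orth[OF a1] Aseq_hk[of "2 * n ^ j"] a1 by simp
      also have "h2inner g (Aseq (n ^ j)) = 0"
      proof (cases j)
        case 0
        then show ?thesis by (simp add: Aseq_Suc0 inner_zero_right)
      next
        case (Suc j')
        have "n ^ j \<ge> n" using n1 Suc by (simp add: self_le_power)
        hence a2: "n ^ j \<ge> 2" using n by simp
        thus ?thesis using orth[OF a2] Aseq_hk[of "n ^ j"] by simp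
      qed
      finally show ?thesis by simp
    qed
    define u where "u = (\<lambda>m. \<Sum>k\<in>{..d}. cnj (c k) * (W n ^^ k) (Aseq 2) m)"
    have uH: "u \<in> H2" unfolding u_def using WAH by (intro H2_sum) auto
    have key: "h2inner (F j) u = 0" for j
    proof -
      have "h2inner (F j) u = (\<Sum>k\<in>{..d}. cnj (cnj (c k)) * h2inner (F j) ((W n ^^ k) (Aseq 2)))"
        unfolding u_def using WAH FH by (intro inner_sum_right) auto
      also have "\<dots> = (\<Sum>k\<in>{..d}. c k * h2inner (F (k + j)) (Aseq 2))"
      proof (intro sum.cong refl)
        fix k
        have "h2inner (F j) ((W n ^^ k) (Aseq 2)) = cnj (h2inner ((W n ^^ k) (Aseq 2)) (F j))"
          using inner_cnj[OF WAH FH] .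
        also have "h2inner ((W n ^^ k) (Aseq 2)) (F j) = h2inner (Aseq 2) ((Ws n ^^ k) (F j))"
          by (rule adjoint_iter[OF n1 A2H FH])
        also have "(Ws n ^^ k) (F j) = F (k + j)" by (simp add: F_def funpow_add)
        also have "cnj (h2inner (Aseq 2) (F (k + j))) = h2inner (F (k + j)) (Aseq 2)"
          using inner_cnj[OF A2H FH] by simp
        finally show "cnj (cnj (c k)) * h2inner (F j) ((W n ^^ k) (Aseq 2)) =
                      c k * h2inner (F (k + j)) (Aseq 2)" by simp
      qed
      also have "\<dots> = h2inner (\<lambda>i. \<Sum>k\<in>{..d}. c k * F (k + j) i) (Aseq 2)"
        using FH A2H by (intro inner_sum_left[symmetric]) auto
      also have "(\<lambda>i. \<Sum>k\<in>{..d}. c k * F (k + j) i) = (Ws n ^^ j) g"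
      proof -
        have sw: "(Ws n ^^ k) ((Ws n ^^ j) f) = (Ws n ^^ j) ((Ws n ^^ k) f)" for k
          by (metis funpow_add add.commute comp_apply)
        show ?thesis unfolding g2 Ws_iter_lin by (simp add: F_def funpow_add sw)
      qed
      also have "h2inner ((Ws n ^^ j) g) (Aseq 2) = cnj (h2inner (Aseq 2) ((Ws n ^^ j) g))"
        using inner_cnj[OF A2H Ws_iter_H2[OF n1 gH]] .
      also have "h2inner (Aseq 2) ((Ws n ^^ j) g) = h2inner ((W n ^^ j) (Aseq 2)) g"
        by (rule adjoint_iter[OF n1 A2H gH, symmetric])
      also have "\<dots> = cnj (h2inner g ((W n ^^ j) (Aseq 2)))"
        by (rule inner_cnj[OF gH WAH])
      finally show ?thesis using orthW[of j] by simp
    qed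
    have u0: "u = (\<lambda>_. 0)"
    proof (rule h2norm_zero[OF uH], rule ccontr)
      assume ne: "h2norm u \<noteq> 0"
      have "h2norm u \<ge> 0" unfolding h2norm_def using uH by (intro real_sqrt_ge_zero suminf_nonneg) (auto simp: H2_iff)
      hence "h2norm u > 0" using ne by simp
      then obtain j where j: "h2norm (\<lambda>i. (Wstar n ^^ j) f i - u i) < h2norm u"
        using dens[OF uH] by blast
      have "(Wstar n ^^ j) f = F j" unfolding F_def by (rule Wstar_iter[OF n1 fH])
      hence "h2norm (\<lambda>i. F j i - u i) < h2norm u" using j by simp
      moreover have "h2norm u \<le> h2norm (\<lambda>i. F j i - u i)"
        by (rule norm_orth[OF FH uH key])
      ultimately show False by simp
    qed
    define q where "q = map_poly cnj p"
    have dq: "degree q \<le> d" unfolding q_def d_def by (simp add: degree_map_poly)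
    have "Wp n q (Aseq 2) = u"
    proof
      fix m
      have "Wp n q (Aseq 2) m = (\<Sum>k\<le>d. coeff q k * Aseq 2 (m div n ^ k))"
        by (rule Wp_bound[OF dq])
      thus "Wp n q (Aseq 2) m = u m"
        by (simp add: q_def coeff_map_poly u_def c_def W_iter)
    qed
    hence Wq: "Wp n q (Aseq 2) = (\<lambda>_. 0)" using u0 by simp
    have A20: "Aseq 2 0 \<noteq> 0" by (simp add: Aseq_def hr_def)
    have "q = 0"
    proof (rule ccontr)
      assume "q \<noteq> 0"
      from Wp_inj[OF n A2H this Wq] A20 show False by simp
    qed
    have "coeff p k = 0" for k
    proof -
      have "cnj (coeff p k) = coeff q k" by (simp add: q_def coeff_map_poly)
      also have "\<dots> = 0" using \<open>q = 0\<close> by simp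
      finally show ?thesis by simp
    qed
    hence "p = 0" by (simp add: poly_eq_iff)
    thus "g \<in> {(\<lambda>_. 0)}" using gp by simp
  qed
qed

end
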